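(* The polynomial $\mathbf{p}_t$ is a well-defined invariant of (oriented) virtual knots, and it is a Vassiliev invariant of degree one for virtual knots (with values in the abelian group $\mathbf{Z}[t]$).
   Context: A virtual knot diagram is an oriented closed curve immersed in the plane with finitely many transverse double points, each either a classical crossing (with over/under information) or a virtual crossing (encircled, carrying no over/under information). Virtual knots are equivalence classes of such diagrams under the classical Reidemeister moves and the virtual Reidemeister moves (moves V1, V2, V3 involving only virtual crossings, and the mixed move in which a strand containing only virtual crossings passes across a classical crossing). The sign $\operatorname{sign}(d)\in\{\pm1\}$ of a classical crossing $d$ is $+1$ if the pair (direction of over-strand, direction of under-strand) is a positively oriented basis of the plane, and $-1$ otherwise. Smoothing a diagram at a classical crossing $d$ means replacing $d$ by two non-crossing arcs in the unique way respecting orientations; this yields a two-component virtual link diagram. Order its components as $(1,2)$, forget over/under data, and set $i(d)=\sum_{x\in 1\cap 2}\operatorname{sgn}(x)$, where $1\cap 2$ is the set of classical crossings between the two components and $\operatorname{sgn}(x)=+1$ if (tangent of component 1, tangent of component 2) at $x$ is positively oriented, $-1$ otherwise; $|i(d)|$ does not depend on the ordering. For a virtual knot $K$ with diagram $\widetilde K$, $\mathbf{p}_t(K)=\sum_d \operatorname{sign}(d)\,(t^{|i(d)|}-1)\in\mathbf{Z}[t]$, summed over all classical crossings $d$ of $\widetilde K$. Singular virtual knots are virtual knots with finitely many additional transverse self-intersection points (double-points), considered up to the classical and virtual Reidemeister moves together with the standard moves involving double-points. Any invariant $V$ of virtual knots with values in an abelian group $A$ extends to singular virtual knots by the recursion $V(K)=V(K^+)-V(K^-)$,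 where $K^\pm$ is obtained by resolving a chosen double-point of $K$ into a positive, resp. negative, classical crossing (the result is independent of the order of resolution). $V$ is a Vassiliev invariant of degree $\le n$ if it vanishes on all singular virtual knots with more than $n$ double-points; the degree is the smallest such $n$. *)

theory Defs
  imports "HOL-Computational_Algebra.Polynomial" "HOL-Library.Multiset"
begin

text \<open>Virtual knots are encoded by Gauss diagrams (Goussarov--Polyak--Viro).
A Gauss diagram is a cyclic word over letters (c, b): c a crossing label,
b = True for the over passage and b = False for the under passage, read along
the oriented knot, together with a sign function on the labels.\<close>

type_synonym gword = "(nat \<times> bool) list"
type_synonym gd = "gword \<times> (nat \<Rightarrow> int)"

definition labels :: "gword \<Rightarrow> nat set" where
  "labels w = fst ` set w"

definition wf_gd :: "gword \<Rightarrow> (nat \<Rightarrow> int) \<Rightarrow> bool" where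
  "wf_gd w s \<longleftrightarrow> distinct w \<and>
     (\<forall>c\<in>labels w. (c, True) \<in> set w \<and> (c, False) \<in> set w \<and> (s c = 1 \<or> s c = -1))"

text \<open>Elementary moves: rotation of the base point, relabelling, and the
Gauss-diagram versions of all oriented Reidemeister moves R1, R2, R3
(virtual moves are invisible on Gauss diagrams).\<close>

definition r3_top :: "int \<Rightarrow> nat \<Rightarrow> nat \<Rightarrow> gword" where
  "r3_top e x y = (if e = 1 then [(x, True), (y, True)] else [(y, True), (x, True)])"
definition r3_mid :: "int \<Rightarrow> nat \<Rightarrow> nat \<Rightarrow> gword" where
  "r3_mid e x z = (if e = 1 then [(x, False), (z, True)] else [(z, True), (x, False)])"
definition r3_bot :: "int \<Rightarrow> nat \<Rightarrow> nat \<Rightarrow> gword" where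
  "r3_bot e y z = (if e = 1 then [(y, False), (z, False)] else [(z, False), (y, False)])"

inductive gd_move :: "gd \<Rightarrow> gd \<Rightarrow> bool" where
  rotate: "wf_gd (u @ v) s \<Longrightarrow> gd_move (u @ v, s) (v @ u, s)"
| relabel: "wf_gd w s \<Longrightarrow> inj_on f (labels w) \<Longrightarrow> (\<forall>c\<in>labels w. s' (f c) = s c) \<Longrightarrow>
     gd_move (w, s) (map (\<lambda>(c, b). (f c, b)) w, s')"
| R1: "wf_gd (u @ v) s \<Longrightarrow> c \<notin> labels (u @ v) \<Longrightarrow> e \<in> {1, -1} \<Longrightarrow>
     gd_move (u @ v, s) (u @ [(c, b), (c, \<not> b)] @ v, s(c := e))"
| R2: "wf_gd (u @ v @ x) s \<Longrightarrow> c \<noteq> d \<Longrightarrow> c \<notin> labels (u @ v @ x) \<Longrightarrow> d \<notin> labels (u @ v @ x) \<Longrightarrow>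
     e \<in> {1, -1} \<Longrightarrow> Q \<in> {[(c, False), (d, False)], [(d, False), (c, False)]} \<Longrightarrow>
     gd_move (u @ v @ x, s) (u @ [(c, True), (d, True)] @ v @ Q @ x, s(c := e, d := - e))"
| R3: "wf_gd (A @ P1 @ B @ P2 @ C @ P3 @ D) s \<Longrightarrow> x \<noteq> y \<Longrightarrow> x \<noteq> z \<Longrightarrow> y \<noteq> z \<Longrightarrow>
     e1 \<in> {1, -1} \<Longrightarrow> e2 \<in> {1, -1} \<Longrightarrow> e3 \<in> {1, -1} \<Longrightarrow> \<omega> \<in> {1, -1} \<Longrightarrow>
     mset [P1, P2, P3] = mset [r3_top e1 x y, r3_mid e2 x z, r3_bot e3 y z] \<Longrightarrow>
     s x = e1 * e2 * \<omega> \<Longrightarrow> s y = e1 * e3 * \<omega> \<Longrightarrow> s z = e2 * e3 * \<omega> \<Longrightarrow>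
     gd_move (A @ P1 @ B @ P2 @ C @ P3 @ D, s) (A @ rev P1 @ B @ rev P2 @ C @ rev P3 @ D, s)"

definition gd_equiv :: "gd \<Rightarrow> gd \<Rightarrow> bool" where
  "gd_equiv = (symclp gd_move)\<^sup>*\<^sup>*"

definition is_invariant :: "(gd \<Rightarrow> 'a) \<Rightarrow> bool" where
  "is_invariant V \<longleftrightarrow> (\<forall>D1 D2. wf_gd (fst D1) (snd D1) \<longrightarrow> gd_equiv D1 D2 \<longrightarrow> V D1 = V D2)"

text \<open>Smoothing at d: component 1 consists of the passages strictly between
the two occurrences of d.\<close>
definition arc :: "gword \<Rightarrow> nat \<Rightarrow> (nat \<times> bool) set" where
  "arc w d = {w ! k | k. \<exists>i j. i < k \<and> k < j \<and> j < length w \<and> fst (w ! i) = d \<and> fst (w ! j) = d}"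

text \<open>Index i(d): sum over crossings between the two components of sgn(x),
which is sign(x) if the over strand at x belongs to component 1, else -sign(x).\<close>
definition idx :: "gword \<Rightarrow> (nat \<Rightarrow> int) \<Rightarrow> nat \<Rightarrow> int" where
  "idx w s d = (\<Sum>x\<in>labels w - {d}.
      if (x, True) \<in> arc w d \<and> (x, False) \<notin> arc w d then s x
      else if (x, False) \<in> arc w d \<and> (x, True) \<notin> arc w d then - s x
      else 0)"

definition pt :: "gd \<Rightarrow> int poly" where
  "pt D = (\<Sum>d\<in>labels (fst D). smult (snd D d) (monom 1 (nat \<bar>idx (fst D) (snd D) d\<bar>) - 1))"

text \<open>Singular Gauss diagrams: a wf diagram with a set Dp of labels marked as
double points; for d in Dp the stored arrow (with sign 1) is the positive
resolution.\<close>
definition sing_wf :: "gword \<Rightarrow> (nat \<Rightarrow> int) \<Rightarrow> nat set \<Rightarrow> bool" where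
  "sing_wf w s Dp \<longleftrightarrow> wf_gd w s \<and> Dp \<subseteq> labels w \<and> (\<forall>d\<in>Dp. s d = 1)"

definition resolve :: "gword \<Rightarrow> (nat \<Rightarrow> int) \<Rightarrow> nat set \<Rightarrow> gd" where
  "resolve w s S = (map (\<lambda>(c, b). (c, if c \<in> S then \<not> b else b)) w,
                    \<lambda>c. if c \<in> S then - s c else s c)"

text \<open>Extension V(K) = V(K+) - V(K-), iterated over all double points.\<close>
definition vext :: "(gd \<Rightarrow> 'a::ab_group_add) \<Rightarrow> gword \<Rightarrow> (nat \<Rightarrow> int) \<Rightarrow> nat set \<Rightarrow> 'a" where
  "vext V w s Dp = (\<Sum>S\<in>Pow Dp. (if even (card S) then V (resolve w s S) else - V (resolve w s S)))"

definition vassiliev_le :: "(gd \<Rightarrow> 'a::ab_group_add) \<Rightarrow> nat \<Rightarrow> bool" where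
  "vassiliev_le V n \<longleftrightarrow> (\<forall>w s Dp. sing_wf w s Dp \<longrightarrow> card Dp > n \<longrightarrow> vext V w s Dp = 0)"

definition vassiliev_degree :: "(gd \<Rightarrow> 'a::ab_group_add) \<Rightarrow> nat \<Rightarrow> bool" where
  "vassiliev_degree V n \<longleftrightarrow> vassiliev_le V n \<and> (\<forall>m<n. \<not> vassiliev_le V m)"

end

theory Submission
  imports Defs
begin

definition sg :: "(nat \<Rightarrow> int) \<Rightarrow> nat \<times> bool \<Rightarrow> int" where
  "sg s e = (if snd e then s (fst e) else - s (fst e))"

lemma fst_d_cases: "fst e = d \<Longrightarrow> e = (d, True) \<or> e = (d, False)"
  by (cases e) (cases "snd e"; auto)

lemma arc_dec:
  assumes dist: "distinct (u @ [p] @ v @ [q] @ x)" and fp: "fst p = d" and fq: "fst q = d"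
  shows "arc (u @ [p] @ v @ [q] @ x) d = set v"
proof -
  define w where "w = u @ [p] @ v @ [q] @ x"
  define i0 where "i0 = length u"
  define j0 where "j0 = length u + 1 + length v"
  have wi0: "w ! i0 = p" unfolding w_def i0_def by (simp add: nth_append)
  have wj0: "w ! j0 = q" unfolding w_def j0_def by (simp add: nth_append)
  have lens: "i0 < j0" "j0 < length w" unfolding w_def i0_def j0_def by auto
  have pq: "p \<noteq> q" using dist by auto
  have only: "i = i0 \<or> i = j0" if "i < length w" "fst (w ! i) = d" for i
  proof -
    have dw: "distinct w" using dist w_def by simp
    have "w ! i = p \<or> w ! i = q"
      using fst_d_cases[OF that(2)] fst_d_cases[OF fp] fst_d_cases[OF fq] pq by auto
    thus ?thesis using dw lens that(1) wi0 wj0 nth_eq_iff_index_eq by (metis order.strict_trans)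
  qed
  have "arc w d = {w ! k | k. i0 < k \<and> k < j0}"
  proof (rule set_eqI, rule iffI)
    fix e assume "e \<in> arc w d"
    then obtain k i j where "e = w ! k" "i < k" "k < j" "j < length w" "fst (w ! i) = d" "fst (w ! j) = d"
      unfolding arc_def by blast
    moreover have "i = i0 \<or> i = j0" "j = i0 \<or> j = j0" using only calculation by auto
    ultimately show "e \<in> {w ! k | k. i0 < k \<and> k < j0}" using lens by auto
  next
    fix e assume "e \<in> {w ! k | k. i0 < k \<and> k < j0}"
    then obtain k where "e = w ! k" "i0 < k" "k < j0" by blast
    then show "e \<in> arc w d" unfolding arc_def using lens wi0 wj0 fp fq by blast
  qed
  also have "\<dots> = set v"
  proof (rule set_eqI, rule iffI)
    fix e assume "e \<in> {w ! k | k. i0 < k \<and> k < j0}"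
    then obtain k where k: "e = w ! k" "i0 < k" "k < j0" by blast
    have "w ! k = v ! (k - i0 - 1)" using k(2,3) unfolding w_def i0_def j0_def
      by (simp add: nth_append, arith)
    then have "e = v ! (k - i0 - 1)" using k(1) by simp
    moreover have "k - i0 - 1 < length v" using k unfolding i0_def j0_def by auto
    ultimately show "e \<in> set v" by simp
  next
    fix e assume "e \<in> set v"
    then obtain m where m: "m < length v" "e = v ! m" by (auto simp: in_set_conv_nth)
    have e1: "w = (u @ [p]) @ (v @ [q] @ x)" unfolding w_def by simp
    have e2: "i0 + 1 + m = length (u @ [p]) + m" unfolding i0_def by simp
    have "w ! (i0 + 1 + m) = (v @ [q] @ x) ! m" unfolding e1 e2 by (rule nth_append_length_plus)
    also have "\<dots> = v ! m" using m(1) by (simp add: nth_append)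
    finally have ee: "e = w ! (i0 + 1 + m)" using m(2) by simp
    have "i0 < i0 + 1 + m" "i0 + 1 + m < j0" using m(1) unfolding j0_def i0_def by auto
    then show "e \<in> {w ! k | k. i0 < k \<and> k < j0}" using ee by blast
  qed
  finally show ?thesis unfolding w_def .
qed

definition cfn :: "(nat \<times> bool) set \<Rightarrow> (nat \<Rightarrow> int) \<Rightarrow> nat \<Rightarrow> int" where
  "cfn V s x = (if (x, True) \<in> V \<and> (x, False) \<notin> V then s x
      else if (x, False) \<in> V \<and> (x, True) \<notin> V then - s x else 0)"

lemma idx_cfn: "idx w s d = (\<Sum>x\<in>labels w - {d}. cfn (arc w d) s x)"
  unfolding idx_def cfn_def by simp

lemma cfn_sum:
  assumes "finite K" "V \<subseteq> K \<times> UNIV"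
  shows "(\<Sum>x\<in>K. cfn V s x) = (\<Sum>e\<in>V. sg s e)"
proof -
  have fin: "finite (K \<times> (UNIV :: bool set))" using assms(1) by simp
  have "(\<Sum>e\<in>V. sg s e) = (\<Sum>e\<in>(K \<times> UNIV) \<inter> V. sg s e)"
    using assms(2) by (simp add: Int_absorb1)
  also have "\<dots> = (\<Sum>e\<in>K \<times> UNIV. if e \<in> V then sg s e else 0)"
    by (rule sum.inter_restrict[OF fin])
  also have "\<dots> = (\<Sum>x\<in>K. \<Sum>b\<in>UNIV. if (x, b) \<in> V then sg s (x, b) else 0)"
    by (simp add: sum.cartesian_product)
  also have "\<dots> = (\<Sum>x\<in>K. cfn V s x)"
    by (rule sum.cong) (auto simp: UNIV_bool cfn_def sg_def)
  finally show ?thesis by simp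
qed

lemma finite_labels[simp]: "finite (labels w)"
  unfolding labels_def by simp

lemma idx_dec:
  assumes dist: "distinct (u @ [p] @ v @ [q] @ x)" and fp: "fst p = d" and fq: "fst q = d"
  shows "idx (u @ [p] @ v @ [q] @ x) s d = sum_list (map (sg s) v)"
proof -
  define w where "w = u @ [p] @ v @ [q] @ x"
  have pq: "p \<noteq> q" using dist by auto
  have sub: "set v \<subseteq> (labels w - {d}) \<times> UNIV"
  proof
    fix e assume e: "e \<in> set v"
    have "fst e \<noteq> d"
    proof
      assume "fst e = d"
      then have "e = p \<or> e = q"
        using fst_d_cases[of e d] fst_d_cases[OF fp] fst_d_cases[OF fq] pq by auto
      then show False using e dist by auto
    qed
    moreover have "fst e \<in> labels w" using e unfolding w_def labels_def by auto
    ultimately show "e \<in> (labels w - {d}) \<times> UNIV" by (cases e) auto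
  qed
  have "idx w s d = (\<Sum>x\<in>labels w - {d}. cfn (set v) s x)"
    unfolding idx_cfn w_def arc_dec[OF dist fp fq] ..
  also have "\<dots> = (\<Sum>e\<in>set v. sg s e)"
    by (rule cfn_sum[OF _ sub]) simp
  also have "\<dots> = sum_list (map (sg s) v)"
    using dist by (simp add: sum_list_distinct_conv_sum_set)
  finally show ?thesis unfolding w_def .
qed

lemma dec_ex:
  assumes "distinct w" "(d, True) \<in> set w" "(d, False) \<in> set w"
  shows "\<exists>u p v q x. w = u @ [p] @ v @ [q] @ x \<and> fst p = d \<and> fst q = d"
proof -
  obtain a b where w: "w = a @ (d, True) # b" using split_list[OF assms(2)] by blast
  then have "(d, False) \<in> set a \<or> (d, False) \<in> set b" using assms(3) by auto
  then show ?thesis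
  proof
    assume "(d, False) \<in> set a"
    then obtain a1 a2 where "a = a1 @ (d, False) # a2" using split_list by metis
    then have "w = a1 @ [(d, False)] @ a2 @ [(d, True)] @ b" using w by simp
    then show ?thesis by fastforce
  next
    assume "(d, False) \<in> set b"
    then obtain b1 b2 where "b = b1 @ (d, False) # b2" using split_list by metis
    then have "w = a @ [(d, True)] @ b1 @ [(d, False)] @ b2" using w by simp
    then show ?thesis by fastforce
  qed
qed

lemma sum_all:
  assumes "wf_gd w s"
  shows "sum_list (map (sg s) w) = 0"
proof -
  have d: "distinct w" using assms unfolding wf_gd_def by simp
  have setw: "set w = labels w \<times> UNIV"
  proof
    show "set w \<subseteq> labels w \<times> UNIV" unfolding labels_def by force
    show "labels w \<times> UNIV \<subseteq> set w"
    proof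
      fix e assume "e \<in> labels w \<times> (UNIV :: bool set)"
      then show "e \<in> set w" using assms unfolding wf_gd_def
        by (cases e, cases "snd e") auto
    qed
  qed
  have "sum_list (map (sg s) w) = (\<Sum>e\<in>set w. sg s e)"
    using d by (simp add: sum_list_distinct_conv_sum_set)
  also have "\<dots> = (\<Sum>x\<in>labels w. \<Sum>b\<in>UNIV. sg s (x, b))"
    unfolding setw by (simp add: sum.cartesian_product)
  also have "\<dots> = 0" by (simp add: UNIV_bool sg_def)
  finally show ?thesis .
qed

lemma labels_iff: "d \<in> labels w \<longleftrightarrow> (d, True) \<in> set w \<or> (d, False) \<in> set w"
proof
  assume "d \<in> labels w"
  then obtain e where e: "e \<in> set w" "fst e = d" unfolding labels_def by blast
  then have "e = (d, True) \<or> e = (d, False)" by (intro fst_d_cases)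
  then show "(d, True) \<in> set w \<or> (d, False) \<in> set w" using e(1) by blast
next
  assume "(d, True) \<in> set w \<or> (d, False) \<in> set w"
  then show "d \<in> labels w"
    using image_eqI[of d fst "(d,True)" "set w"] image_eqI[of d fst "(d,False)" "set w"]
    unfolding labels_def by auto
qed

lemma two_loc:
  assumes dist: "distinct (a @ b)" and pq: "p \<noteq> q" and p: "p \<in> set (a @ b)" and q: "q \<in> set (a @ b)"
  shows "(\<exists>a1 a2 a3 p' q'. {p', q'} = {p, q} \<and> a = a1 @ [p'] @ a2 @ [q'] @ a3)
       \<or> (\<exists>a1 a2 a3 p' q'. {p', q'} = {p, q} \<and> b = a1 @ [p'] @ a2 @ [q'] @ a3)
       \<or> (\<exists>a1 a2 b1 b2 p' q'. {p', q'} = {p, q} \<and> a = a1 @ [p'] @ a2 \<and> b = b1 @ [q'] @ b2)"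
proof -
  have two: "\<exists>a1 a2 a3 p' q'. {p', q'} = {p, q} \<and> c = a1 @ [p'] @ a2 @ [q'] @ a3"
    if pc: "p \<in> set c" and qc: "q \<in> set c" for c
  proof -
    obtain c1 c2 where c: "c = c1 @ p # c2" using split_list[OF pc] by blast
    then have "q \<in> set c1 \<or> q \<in> set c2" using qc pq by auto
    then show ?thesis
    proof
      assume "q \<in> set c1"
      then obtain d1 d2 where "c1 = d1 @ q # d2" using split_list by metis
      then have "{q, p} = {p, q} \<and> c = d1 @ [q] @ d2 @ [p] @ c2" using c by auto
      then show ?thesis by (intro exI)
    next
      assume "q \<in> set c2"
      then obtain d1 d2 where "c2 = d1 @ q # d2" using split_list by metis
      then have "{p, q} = {p, q} \<and> c = c1 @ [p] @ d1 @ [q] @ d2" using c by simp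
      then show ?thesis by (intro exI)
    qed
  qed
  have "(p \<in> set a \<and> q \<in> set a) \<or> (p \<in> set b \<and> q \<in> set b) \<or> (p \<in> set a \<and> q \<in> set b) \<or> (q \<in> set a \<and> p \<in> set b)"
    using p q by auto
  then show ?thesis
  proof (elim disjE)
    assume "p \<in> set a \<and> q \<in> set a"
    then have "\<exists>a1 a2 a3 p' q'. {p', q'} = {p, q} \<and> a = a1 @ [p'] @ a2 @ [q'] @ a3"
      using two by simp
    then show ?thesis by (rule disjI1)
  next
    assume "p \<in> set b \<and> q \<in> set b"
    then have "\<exists>a1 a2 a3 p' q'. {p', q'} = {p, q} \<and> b = a1 @ [p'] @ a2 @ [q'] @ a3"
      using two by simp
    then show ?thesis by (intro disjI2 disjI1)
  next
    assume h: "p \<in> set a \<and> q \<in> set b"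
    obtain a1 a2 where "a = a1 @ p # a2" using split_list h by metis
    moreover obtain b1 b2 where "b = b1 @ q # b2" using split_list h by metis
    ultimately have "{p, q} = {p, q} \<and> a = a1 @ [p] @ a2 \<and> b = b1 @ [q] @ b2" by simp
    then show ?thesis by (intro disjI2 exI)
  next
    assume h: "q \<in> set a \<and> p \<in> set b"
    obtain a1 a2 where "a = a1 @ q # a2" using split_list h by metis
    moreover obtain b1 b2 where "b = b1 @ p # b2" using split_list h by metis
    ultimately have "{q, p} = {p, q} \<and> a = a1 @ [q] @ a2 \<and> b = b1 @ [p] @ b2" by auto
    then show ?thesis by (intro disjI2 exI)
  qed
qed

lemma pq_fst: "{p', q'} = {(d, True), (d, False)} \<Longrightarrow> fst p' = d \<and> fst q' = d"
  by (auto simp: doubleton_eq_iff)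

lemma sg_pair: "{p', q'} = {(d, True), (d, False)} \<Longrightarrow> sg s p' + sg s q' = 0"
  by (auto simp: doubleton_eq_iff sg_def)

lemma idx_ins:
  assumes dist: "distinct (a @ m @ b)" and nm: "d \<notin> labels m"
    and T: "(d, True) \<in> set (a @ b)" and F: "(d, False) \<in> set (a @ b)"
  shows "idx (a @ m @ b) s d = idx (a @ b) s d
           + (if d \<in> labels a \<and> d \<in> labels b then sum_list (map (sg s) m) else 0)"
proof -
  have dab: "distinct (a @ b)" using dist by auto
  have ne: "(d, True) \<noteq> (d, False)" by simp
  from two_loc[OF dab ne T F] show ?thesis
  proof (elim disjE exE conjE)
    fix a1 a2 a3 p' q' assume pq: "{p', q'} = {(d, True), (d, False)}" and a: "a = a1 @ [p'] @ a2 @ [q'] @ a3"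
    have f: "fst p' = d" "fst q' = d" using pq_fst[OF pq] by auto
    have "idx (a @ m @ b) s d = sum_list (map (sg s) a2)"
      using idx_dec[of a1 p' a2 q' "a3 @ m @ b" d s] dist f a by simp
    moreover have "idx (a @ b) s d = sum_list (map (sg s) a2)"
      using idx_dec[of a1 p' a2 q' "a3 @ b" d s] dab f a by simp
    moreover have "d \<notin> labels b"
    proof
      assume "d \<in> labels b"
      then have "(d, True) \<in> set b \<or> (d, False) \<in> set b" by (simp add: labels_iff)
      moreover have "(d, True) \<in> set a" "(d, False) \<in> set a" using pq a by (auto simp: doubleton_eq_iff)
      ultimately show False using dab by auto
    qed
    ultimately show ?thesis by simp
  next
    fix a1 a2 a3 p' q' assume pq: "{p', q'} = {(d, True), (d, False)}" and b: "b = a1 @ [p'] @ a2 @ [q'] @ a3"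
    have f: "fst p' = d" "fst q' = d" using pq_fst[OF pq] by auto
    have "idx (a @ m @ b) s d = sum_list (map (sg s) a2)"
      using idx_dec[of "a @ m @ a1" p' a2 q' a3 d s] dist f b by simp
    moreover have "idx (a @ b) s d = sum_list (map (sg s) a2)"
      using idx_dec[of "a @ a1" p' a2 q' a3 d s] dab f b by simp
    moreover have "d \<notin> labels a"
    proof
      assume "d \<in> labels a"
      then have "(d, True) \<in> set a \<or> (d, False) \<in> set a" by (simp add: labels_iff)
      moreover have "(d, True) \<in> set b" "(d, False) \<in> set b" using pq b by (auto simp: doubleton_eq_iff)
      ultimately show False using dab by auto
    qed
    ultimately show ?thesis by simp
  next
    fix a1 a2 b1 b2 p' q' assume pq: "{p', q'} = {(d, True), (d, False)}"
      and a: "a = a1 @ [p'] @ a2" and b: "b = b1 @ [q'] @ b2"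
    have f: "fst p' = d" "fst q' = d" using pq_fst[OF pq] by auto
    have "idx (a @ m @ b) s d = sum_list (map (sg s) (a2 @ m @ b1))"
      using idx_dec[of a1 p' "a2 @ m @ b1" q' b2 d s] dist f a b by simp
    moreover have "idx (a @ b) s d = sum_list (map (sg s) (a2 @ b1))"
      using idx_dec[of a1 p' "a2 @ b1" q' b2 d s] dab f a b by simp
    moreover have "d \<in> labels a" "d \<in> labels b" using a b f unfolding labels_def by force+
    ultimately show ?thesis by simp
  qed
qed

lemma idx_rot:
  assumes wf: "wf_gd (u @ v) s" and d: "d \<in> labels (u @ v)"
  shows "\<bar>idx (v @ u) s d\<bar> = \<bar>idx (u @ v) s d\<bar>"
proof -
  have dist: "distinct (u @ v)" using wf unfolding wf_gd_def by simp
  have dist2: "distinct (v @ u)" using dist by auto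
  have T: "(d, True) \<in> set (u @ v)" and F: "(d, False) \<in> set (u @ v)"
    using wf d unfolding wf_gd_def by auto
  have ne: "(d, True) \<noteq> (d, False)" by simp
  from two_loc[OF dist ne T F] show ?thesis
  proof (elim disjE exE conjE)
    fix a1 a2 a3 p' q' assume pq: "{p', q'} = {(d, True), (d, False)}" and a: "u = a1 @ [p'] @ a2 @ [q'] @ a3"
    have f: "fst p' = d" "fst q' = d" using pq_fst[OF pq] by auto
    have "idx (u @ v) s d = sum_list (map (sg s) a2)"
      using idx_dec[of a1 p' a2 q' "a3 @ v" d s] dist f a by simp
    moreover have "idx (v @ u) s d = sum_list (map (sg s) a2)"
      using idx_dec[of "v @ a1" p' a2 q' a3 d s] dist2 f a by simp
    ultimately show ?thesis by simp
  next
    fix a1 a2 a3 p' q' assume pq: "{p', q'} = {(d, True), (d, False)}" and b: "v = a1 @ [p'] @ a2 @ [q'] @ a3"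
    have f: "fst p' = d" "fst q' = d" using pq_fst[OF pq] by auto
    have "idx (u @ v) s d = sum_list (map (sg s) a2)"
      using idx_dec[of "u @ a1" p' a2 q' a3 d s] dist f b by simp
    moreover have "idx (v @ u) s d = sum_list (map (sg s) a2)"
      using idx_dec[of a1 p' a2 q' "a3 @ u" d s] dist2 f b by simp
    ultimately show ?thesis by simp
  next
    fix a1 a2 b1 b2 p' q' assume pq: "{p', q'} = {(d, True), (d, False)}"
      and a: "u = a1 @ [p'] @ a2" and b: "v = b1 @ [q'] @ b2"
    have f: "fst p' = d" "fst q' = d" using pq_fst[OF pq] by auto
    have h1: "idx (u @ v) s d = sum_list (map (sg s) a2) + sum_list (map (sg s) b1)"
      using idx_dec[of a1 p' "a2 @ b1" q' b2 d s] dist f a b by simp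
    have h2: "idx (v @ u) s d = sum_list (map (sg s) b2) + sum_list (map (sg s) a1)"
      using idx_dec[of b1 q' "b2 @ a1" p' a2 d s] dist2 f a b by simp
    have tot: "sum_list (map (sg s) a1) + sg s p' + sum_list (map (sg s) a2)
       + (sum_list (map (sg s) b1) + sg s q' + sum_list (map (sg s) b2)) = 0"
      using sum_all[OF wf] unfolding a b by simp
    have "sg s p' + sg s q' = 0" by (rule sg_pair[OF pq])
    then have "idx (v @ u) s d = - idx (u @ v) s d" using h1 h2 tot by linarith
    then show ?thesis by simp
  qed
qed

lemma idx_map:
  assumes dist: "distinct w" and T: "(d, True) \<in> set w" and F: "(d, False) \<in> set w"
    and inj: "inj_on g (set w)" and fg: "\<forall>e\<in>set w. fst (g e) = f (fst e)"
    and sgg: "\<forall>e\<in>set w. sg s' (g e) = sg s e"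
  shows "idx (map g w) s' (f d) = idx w s d"
proof -
  obtain u p v q x where w: "w = u @ [p] @ v @ [q] @ x" and f: "fst p = d" "fst q = d"
    using dec_ex[OF dist T F] by blast
  have dm: "distinct (map g w)" using dist inj by (simp add: distinct_map)
  have mg: "map g w = map g u @ [g p] @ map g v @ [g q] @ map g x" using w by simp
  have fgp: "fst (g p) = f d" "fst (g q) = f d" using fg f w by auto
  have "idx (map g w) s' (f d) = sum_list (map (sg s') (map g v))"
    unfolding mg by (rule idx_dec) (use dm mg fgp in auto)
  also have "\<dots> = sum_list (map (sg s) v)"
  proof -
    have "\<forall>e\<in>set v. sg s' (g e) = sg s e" using sgg w by simp
    then show ?thesis by (induct v) auto
  qed
  also have "\<dots> = idx w s d" using idx_dec[of u p v q x d s] dist w f by simp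
  finally show ?thesis .
qed

lemma idx_cong_s:
  assumes "\<forall>c\<in>labels w. s c = s' c"
  shows "idx w s d = idx w s' d"
proof -
  show ?thesis unfolding idx_def
  proof (rule sum.cong[OF refl])
    fix x assume "x \<in> labels w - {d}"
    then have "s x = s' x" using assms by auto
    then show "(if (x, True) \<in> arc w d \<and> (x, False) \<notin> arc w d then s x
       else if (x, False) \<in> arc w d \<and> (x, True) \<notin> arc w d then - s x else 0) =
      (if (x, True) \<in> arc w d \<and> (x, False) \<notin> arc w d then s' x
       else if (x, False) \<in> arc w d \<and> (x, True) \<notin> arc w d then - s' x else 0)"
      by simp
  qed
qed


definition seg :: "gword \<Rightarrow> nat \<Rightarrow> gword" where
  "seg w d = takeWhile (\<lambda>e. fst e \<noteq> d) (tl (dropWhile (\<lambda>e. fst e \<noteq> d) w))"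

lemma seg_dec:
  assumes dist: "distinct (u @ [p] @ v @ [q] @ x)" and fp: "fst p = d" and fq: "fst q = d"
  shows "seg (u @ [p] @ v @ [q] @ x) d = v"
proof -
  have pq: "p \<noteq> q" using dist by auto
  have nd: "fst e \<noteq> d" if e: "e \<in> set u \<or> e \<in> set v" for e
  proof
    assume "fst e = d"
    then have "e = p \<or> e = q"
      using fst_d_cases[of e d] fst_d_cases[OF fp] fst_d_cases[OF fq] pq by auto
    then show False using e dist by auto
  qed
  have "dropWhile (\<lambda>e. fst e \<noteq> d) (u @ [p] @ v @ [q] @ x) = p # v @ [q] @ x"
    using nd fp by (simp add: dropWhile_append2)
  moreover have "takeWhile (\<lambda>e. fst e \<noteq> d) (v @ [q] @ x) = v"
    using nd fq by (simp add: takeWhile_append2)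
  ultimately show ?thesis unfolding seg_def by simp
qed

lemma idx_seg:
  assumes "distinct w" "(d, True) \<in> set w" "(d, False) \<in> set w"
  shows "idx w s d = sum_list (map (sg s) (seg w d))"
proof -
  obtain u p v q x where w: "w = u @ [p] @ v @ [q] @ x" and f: "fst p = d" "fst q = d"
    using dec_ex[OF assms] by blast
  show ?thesis using idx_dec[of u p v q x d s] seg_dec[of u p v q x d] assms(1) w f by simp
qed

lemma mset3:
  assumes "mset [a, b, c] = mset [x, y, z]"
  shows "[a, b, c] \<in> {[x, y, z], [x, z, y], [y, x, z], [y, z, x], [z, x, y], [z, y, x]}"
  using assms by (auto simp: add_eq_conv_ex)

lemma r3_own:
  assumes dist: "distinct (A @ P1 @ B @ P2 @ C @ P3 @ D)"
    and xy: "x \<noteq> y" "x \<noteq> z" "y \<noteq> z"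
    and es: "e1 \<in> {1, -1}" "e2 \<in> {1, -1}" "e3 \<in> {1, -1}" "\<omega> \<in> {1, -1}"
    and ms: "mset [P1, P2, P3] = mset [r3_top e1 x y, r3_mid e2 x z, r3_bot e3 y z]"
    and sx: "s x = e1 * e2 * \<omega>" and sy: "s y = e1 * e3 * \<omega>" and sz: "s z = e2 * e3 * \<omega>"
    and c: "c \<in> {x, y, z}"
  shows "idx (A @ rev P1 @ B @ rev P2 @ C @ rev P3 @ D) s c = idx (A @ P1 @ B @ P2 @ C @ P3 @ D) s c"
proof -
  define W where "W = A @ P1 @ B @ P2 @ C @ P3 @ D"
  define V where "V = A @ rev P1 @ B @ rev P2 @ C @ rev P3 @ D"
  have "{P1, P2, P3} = {r3_top e1 x y, r3_mid e2 x z, r3_bot e3 y z}"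
    using arg_cong[OF ms, of set_mset] by simp
  then have "\<Union> (set ` {P1, P2, P3}) = \<Union> (set ` {r3_top e1 x y, r3_mid e2 x z, r3_bot e3 y z})"
    by simp
  then have setP: "set P1 \<union> set P2 \<union> set P3 = {(x, True), (y, True), (x, False), (z, True), (y, False), (z, False)}"
    by (auto simp: r3_top_def r3_mid_def r3_bot_def split: if_splits)
  have disj: "set L \<inter> (set P1 \<union> set P2 \<union> set P3) = {}" if "L \<in> {A, B, C, D}" for L
    using dist that by auto
  have ball: "\<forall>e\<in>set L. fst e \<noteq> c'" if "L \<in> {A, B, C, D}" "c' \<in> {x, y, z}" for L c'
  proof
    fix e assume e: "e \<in> set L"
    show "fst e \<noteq> c'"
    proof
      assume "fst e = c'"
      then have "e = (c', True) \<or> e = (c', False)" by (rule fst_d_cases)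
      then have "e \<in> set P1 \<union> set P2 \<union> set P3" using setP that(2) by auto
      then show False using disj[OF that(1)] e by auto
    qed
  qed
  have bA: "\<forall>e\<in>set A. fst e \<noteq> x" "\<forall>e\<in>set A. fst e \<noteq> y" "\<forall>e\<in>set A. fst e \<noteq> z"
    and bB: "\<forall>e\<in>set B. fst e \<noteq> x" "\<forall>e\<in>set B. fst e \<noteq> y" "\<forall>e\<in>set B. fst e \<noteq> z"
    and bC: "\<forall>e\<in>set C. fst e \<noteq> x" "\<forall>e\<in>set C. fst e \<noteq> y" "\<forall>e\<in>set C. fst e \<noteq> z"
    and bD: "\<forall>e\<in>set D. fst e \<noteq> x" "\<forall>e\<in>set D. fst e \<noteq> y" "\<forall>e\<in>set D. fst e \<noteq> z"
    using ball by auto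
  have setWV: "set V = set W" unfolding V_def W_def by auto
  have dW: "distinct W" using dist W_def by simp
  have dV: "distinct V" using dist unfolding V_def by auto
  have memW: "(c, True) \<in> set W" "(c, False) \<in> set W" using c setP unfolding W_def by auto
  have "idx W s c = sum_list (map (sg s) (seg W c))" using idx_seg[OF dW memW] .
  moreover have "idx V s c = sum_list (map (sg s) (seg V c))" using idx_seg[OF dV memW[folded setWV]] .
  moreover have "sum_list (map (sg s) (seg V c)) = sum_list (map (sg s) (seg W c))"
  proof -
    have e1: "e1 = 1 \<or> e1 = -1" and e2: "e2 = 1 \<or> e2 = -1" and e3: "e3 = 1 \<or> e3 = -1"
      using es by auto
    have c': "c = x \<or> c = y \<or> c = z" using c by auto
    have perm: "[P1, P2, P3] = [r3_top e1 x y, r3_mid e2 x z, r3_bot e3 y z]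
      \<or> [P1, P2, P3] = [r3_top e1 x y, r3_bot e3 y z, r3_mid e2 x z]
      \<or> [P1, P2, P3] = [r3_mid e2 x z, r3_top e1 x y, r3_bot e3 y z]
      \<or> [P1, P2, P3] = [r3_mid e2 x z, r3_bot e3 y z, r3_top e1 x y]
      \<or> [P1, P2, P3] = [r3_bot e3 y z, r3_top e1 x y, r3_mid e2 x z]
      \<or> [P1, P2, P3] = [r3_bot e3 y z, r3_mid e2 x z, r3_top e1 x y]"
      using mset3[OF ms] by simp
    show ?thesis
      using perm e1 e2 e3 c' unfolding V_def W_def
      by (elim disjE; simp add: seg_def dropWhile_append takeWhile_append r3_top_def r3_mid_def r3_bot_def
            sg_def xy xy[symmetric] bA bB bC bD sx sy sz)
  qed
  ultimately show ?thesis unfolding V_def W_def by simp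
qed


lemma pt_pair: "pt (w, s) = (\<Sum>d\<in>labels w. smult (s d) (monom 1 (nat \<bar>idx w s d\<bar>) - 1))"
  unfolding pt_def by simp

lemma pt_eq:
  assumes lab: "labels w' = labels w \<union> N" and dj: "labels w \<inter> N = {}" and fin: "finite N"
    and zero: "(\<Sum>d\<in>N. smult (s' d) (monom 1 (nat \<bar>idx w' s' d\<bar>) - 1)) = 0"
    and eq: "\<forall>d\<in>labels w. s' d = s d \<and> \<bar>idx w' s' d\<bar> = \<bar>idx w s d\<bar>"
  shows "pt (w', s') = pt (w, s)"
proof -
  have "pt (w', s') = (\<Sum>d\<in>labels w. smult (s' d) (monom 1 (nat \<bar>idx w' s' d\<bar>) - 1))
      + (\<Sum>d\<in>N. smult (s' d) (monom 1 (nat \<bar>idx w' s' d\<bar>) - 1))"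
    unfolding pt_pair lab by (rule sum.union_disjoint) (use dj fin in auto)
  also have "\<dots> = (\<Sum>d\<in>labels w. smult (s d) (monom 1 (nat \<bar>idx w s d\<bar>) - 1))"
    using zero eq by simp
  finally show ?thesis unfolding pt_pair .
qed

lemma wf_dist: "wf_gd w s \<Longrightarrow> distinct w"
  unfolding wf_gd_def by simp

lemma wf_mem: "wf_gd w s \<Longrightarrow> d \<in> labels w \<Longrightarrow> (d, True) \<in> set w \<and> (d, False) \<in> set w"
  unfolding wf_gd_def by simp

lemma notin_labels_ball: "c \<notin> labels w \<Longrightarrow> \<forall>e\<in>set w. fst e \<noteq> c"
  unfolding labels_def by force

lemma labels_append[simp]: "labels (a @ b) = labels a \<union> labels b"
  unfolding labels_def by auto

lemma labels_Cons[simp]: "labels (e # b) = insert (fst e) (labels b)"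
  unfolding labels_def by auto

lemma labels_Nil[simp]: "labels [] = {}"
  unfolding labels_def by auto

lemma labels_rev[simp]: "labels (rev a) = labels a"
  unfolding labels_def by auto

lemma monom0: "monom (1::int) 0 - 1 = 0"
  by (simp add: monom_0 one_pCons)

lemma move_rotate:
  assumes wf: "wf_gd (u @ v) s"
  shows "wf_gd (v @ u) s \<and> pt (u @ v, s) = pt (v @ u, s)"
proof
  show "wf_gd (v @ u) s" using wf unfolding wf_gd_def labels_def by auto
  show "pt (u @ v, s) = pt (v @ u, s)"
  proof (rule sym, rule pt_eq[where N = "{}"])
    show "\<forall>d\<in>labels (u @ v). s d = s d \<and> \<bar>idx (v @ u) s d\<bar> = \<bar>idx (u @ v) s d\<bar>"
      using idx_rot[OF wf] by simp
  qed auto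
qed

lemma move_relabel:
  assumes wf: "wf_gd w s" and inj: "inj_on f (labels w)" and s': "\<forall>c\<in>labels w. s' (f c) = s c"
  shows "wf_gd (map (\<lambda>(c, b). (f c, b)) w) s' \<and> pt (w, s) = pt (map (\<lambda>(c, b). (f c, b)) w, s')"
proof
  define g where "g = (\<lambda>(c::nat, b::bool). (f c, b))"
  have injg: "inj_on g (set w)"
  proof (rule inj_onI)
    fix e1 e2 assume h: "e1 \<in> set w" "e2 \<in> set w" "g e1 = g e2"
    obtain c1 b1 c2 b2 where e: "e1 = (c1, b1)" "e2 = (c2, b2)" by fastforce
    have l: "c1 \<in> labels w" "c2 \<in> labels w" using h e unfolding labels_def by force+
    have "f c1 = f c2" "b1 = b2" using h(3) e unfolding g_def by auto
    then show "e1 = e2" using inj l e unfolding inj_on_def by blast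
  qed
  have labg: "labels (map g w) = f ` labels w"
    unfolding labels_def g_def by (force simp: image_image)
  have dist: "distinct w" using wf by (rule wf_dist)
  have wfg: "wf_gd (map g w) s'"
    unfolding wf_gd_def
  proof (rule conjI[OF _ ballI])
    show "distinct (map g w)" using dist injg by (simp add: distinct_map)
  next
    fix c assume "c \<in> labels (map g w)"
    then obtain c0 where c0: "c0 \<in> labels w" "c = f c0" using labg by auto
    have m: "(c0, True) \<in> set w" "(c0, False) \<in> set w" "s c0 = 1 \<or> s c0 = -1"
      using wf c0(1) unfolding wf_gd_def by auto
    have "g (c0, True) = (c, True)" "g (c0, False) = (c, False)" unfolding g_def c0 by auto
    then show "(c, True) \<in> set (map g w) \<and> (c, False) \<in> set (map g w) \<and> (s' c = 1 \<or> s' c = -1)"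
      using m s' c0 by (metis image_eqI set_map)
  qed
  then show "wf_gd (map (\<lambda>(c, b). (f c, b)) w) s'" unfolding g_def .
  have fg: "\<forall>e\<in>set w. fst (g e) = f (fst e)" unfolding g_def by auto
  have sgg: "\<forall>e\<in>set w. sg s' (g e) = sg s e"
  proof
    fix e assume "e \<in> set w"
    then have "fst e \<in> labels w" unfolding labels_def by auto
    then show "sg s' (g e) = sg s e" using s' unfolding g_def sg_def by (cases e) auto
  qed
  have "pt (map g w, s') = (\<Sum>d\<in>f ` labels w. smult (s' d) (monom 1 (nat \<bar>idx (map g w) s' d\<bar>) - 1))"
    unfolding pt_pair labg ..
  also have "\<dots> = (\<Sum>d\<in>labels w. smult (s' (f d)) (monom 1 (nat \<bar>idx (map g w) s' (f d)\<bar>) - 1))"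
    by (rule sum.reindex[OF inj, unfolded comp_def])
  also have "\<dots> = (\<Sum>d\<in>labels w. smult (s d) (monom 1 (nat \<bar>idx w s d\<bar>) - 1))"
  proof (rule sum.cong[OF refl])
    fix d assume d: "d \<in> labels w"
    have "idx (map g w) s' (f d) = idx w s d"
      using idx_map[OF dist _ _ injg fg sgg] wf_mem[OF wf d] by simp
    then show "smult (s' (f d)) (monom 1 (nat \<bar>idx (map g w) s' (f d)\<bar>) - 1)
        = smult (s d) (monom 1 (nat \<bar>idx w s d\<bar>) - 1)" using s' d by simp
  qed
  finally show "pt (w, s) = pt (map (\<lambda>(c, b). (f c, b)) w, s')"
    unfolding pt_pair g_def by simp
qed


lemma notin_labels_pair: "c \<notin> labels w \<Longrightarrow> (c, b) \<notin> set w"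
  unfolding labels_def by force

lemma move_R1:
  assumes wf: "wf_gd (u @ v) s" and c: "c \<notin> labels (u @ v)" and e: "e \<in> {1, -1}"
  shows "wf_gd (u @ [(c, b), (c, \<not> b)] @ v) (s(c := e)) \<and>
         pt (u @ v, s) = pt (u @ [(c, b), (c, \<not> b)] @ v, s(c := e))"
proof
  have nu: "(c, b') \<notin> set u" and nv: "(c, b') \<notin> set v" for b'
    using notin_labels_pair[OF c, of b'] by auto
  have dist0: "distinct (u @ v)" using wf by (rule wf_dist)
  have dist: "distinct (u @ [(c, b), (c, \<not> b)] @ v)" using dist0 nu nv by auto
  show wfn: "wf_gd (u @ [(c, b), (c, \<not> b)] @ v) (s(c := e))"
    unfolding wf_gd_def
  proof (rule conjI[OF dist ballI])
    fix k assume k: "k \<in> labels (u @ [(c, b), (c, \<not> b)] @ v)"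
    show "(k, True) \<in> set (u @ [(c, b), (c, \<not> b)] @ v) \<and> (k, False) \<in> set (u @ [(c, b), (c, \<not> b)] @ v)
          \<and> ((s(c := e)) k = 1 \<or> (s(c := e)) k = -1)"
    proof (cases "k = c")
      case True then show ?thesis using e by (cases b) auto
    next
      case False
      then have "k \<in> labels (u @ v)" using k by simp
      then show ?thesis using wf False unfolding wf_gd_def by auto
    qed
  qed
  show "pt (u @ v, s) = pt (u @ [(c, b), (c, \<not> b)] @ v, s(c := e))"
  proof (rule sym, rule pt_eq[where N = "{c}"])
    show "labels (u @ [(c, b), (c, \<not> b)] @ v) = labels (u @ v) \<union> {c}" by auto
    show "labels (u @ v) \<inter> {c} = {}" using c by auto
    have "idx (u @ [(c, b)] @ [] @ [(c, \<not> b)] @ v) (s(c := e)) c = sum_list (map (sg (s(c := e))) [])"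
      by (rule idx_dec) (use dist in auto)
    then show "(\<Sum>d\<in>{c}. smult ((s(c := e)) d) (monom 1 (nat \<bar>idx (u @ [(c, b), (c, \<not> b)] @ v) (s(c := e)) d\<bar>) - 1)) = 0"
      by (simp add: monom0)
    show "\<forall>d\<in>labels (u @ v). (s(c := e)) d = s d \<and>
        \<bar>idx (u @ [(c, b), (c, \<not> b)] @ v) (s(c := e)) d\<bar> = \<bar>idx (u @ v) s d\<bar>"
    proof
      fix d assume d: "d \<in> labels (u @ v)"
      then have dc: "d \<noteq> c" using c by auto
      have mem: "(d, True) \<in> set (u @ v)" "(d, False) \<in> set (u @ v)" using wf_mem[OF wf d] by auto
      have "idx (u @ [(c, b), (c, \<not> b)] @ v) (s(c := e)) d = idx (u @ v) (s(c := e)) d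
          + (if d \<in> labels u \<and> d \<in> labels v then sum_list (map (sg (s(c := e))) [(c, b), (c, \<not> b)]) else 0)"
        by (rule idx_ins[OF dist _ mem]) (use dc in simp)
      also have "\<dots> = idx (u @ v) (s(c := e)) d" by (simp add: sg_def)
      also have "\<dots> = idx (u @ v) s d" by (rule idx_cong_s) (use c in auto)
      finally show "(s(c := e)) d = s d \<and>
        \<bar>idx (u @ [(c, b), (c, \<not> b)] @ v) (s(c := e)) d\<bar> = \<bar>idx (u @ v) s d\<bar>" using dc by simp
    qed
  qed auto
qed


lemma move_R2:
  assumes wf: "wf_gd (u @ v @ x) s" and cd: "c \<noteq> d" and c: "c \<notin> labels (u @ v @ x)"
    and d: "d \<notin> labels (u @ v @ x)" and e: "e \<in> {1, -1}"
    and Q: "Q \<in> {[(c, False), (d, False)], [(d, False), (c, False)]}"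
  shows "wf_gd (u @ [(c, True), (d, True)] @ v @ Q @ x) (s(c := e, d := - e)) \<and>
         pt (u @ v @ x, s) = pt (u @ [(c, True), (d, True)] @ v @ Q @ x, s(c := e, d := - e))"
proof
  define s' where "s' = s(c := e, d := - e)"
  define W where "W = u @ [(c, True), (d, True)] @ v @ Q @ x"
  have nc: "(c, b') \<notin> set u" "(c, b') \<notin> set v" "(c, b') \<notin> set x" for b'
    using notin_labels_pair[OF c, of b'] by auto
  have nd: "(d, b') \<notin> set u" "(d, b') \<notin> set v" "(d, b') \<notin> set x" for b'
    using notin_labels_pair[OF d, of b'] by auto
  have dist0: "distinct (u @ v @ x)" using wf by (rule wf_dist)
  have dist: "distinct W" using dist0 nc nd Q cd unfolding W_def by auto
  have labW: "labels W = labels (u @ v @ x) \<union> {c, d}" using Q unfolding W_def by auto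
  have s'c: "s' c = e" and s'd: "s' d = - e" unfolding s'_def using cd by auto
  show "wf_gd W s'"
    unfolding wf_gd_def
  proof (rule conjI[OF dist ballI])
    fix k assume k: "k \<in> labels W"
    show "(k, True) \<in> set W \<and> (k, False) \<in> set W \<and> (s' k = 1 \<or> s' k = -1)"
    proof (cases "k = c \<or> k = d")
      case True then show ?thesis using e Q s'c s'd unfolding W_def by auto
    next
      case False
      then have "k \<in> labels (u @ v @ x)" using k labW by simp
      then show ?thesis using wf False unfolding wf_gd_def W_def s'_def by auto
    qed
  qed
  show "pt (u @ v @ x, s) = pt (W, s')"
  proof (rule sym, rule pt_eq[where N = "{c, d}"])
    show "labels W = labels (u @ v @ x) \<union> {c, d}" by (rule labW)
    show "labels (u @ v @ x) \<inter> {c, d} = {}" using c d by auto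
    have bc: "\<forall>e\<in>set u. fst e \<noteq> c" "\<forall>e\<in>set v. fst e \<noteq> c" "\<forall>e\<in>set x. fst e \<noteq> c"
      using notin_labels_ball[OF c] by auto
    have bd: "\<forall>e\<in>set u. fst e \<noteq> d" "\<forall>e\<in>set v. fst e \<noteq> d" "\<forall>e\<in>set x. fst e \<noteq> d"
      using notin_labels_ball[OF d] by auto
    have memc: "(c, True) \<in> set W" "(c, False) \<in> set W" and memd: "(d, True) \<in> set W" "(d, False) \<in> set W"
      using Q unfolding W_def by auto
    have "sum_list (map (sg s') (seg W c)) = sum_list (map (sg s') (seg W d))"
      using Q cd cd[symmetric] bc bd s'c s'd unfolding W_def
      by (auto simp: seg_def dropWhile_append takeWhile_append sg_def)
    then have "idx W s' c = idx W s' d" using idx_seg[OF dist memc] idx_seg[OF dist memd] by simp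
    then show "(\<Sum>k\<in>{c, d}. smult (s' k) (monom 1 (nat \<bar>idx W s' k\<bar>) - 1)) = 0"
      using cd s'c s'd by (simp add: smult_minus_left)
    show "\<forall>k\<in>labels (u @ v @ x). s' k = s k \<and> \<bar>idx W s' k\<bar> = \<bar>idx (u @ v @ x) s k\<bar>"
    proof
      fix k assume k: "k \<in> labels (u @ v @ x)"
      then have kc: "k \<noteq> c" "k \<noteq> d" using c d by auto
      have mem: "(k, True) \<in> set (u @ v @ x)" "(k, False) \<in> set (u @ v @ x)" using wf_mem[OF wf k] by auto
      have d1: "distinct ((u @ [(c, True), (d, True)] @ v) @ Q @ x)" using dist unfolding W_def by simp
      have "idx ((u @ [(c, True), (d, True)] @ v) @ Q @ x) s' k = idx ((u @ [(c, True), (d, True)] @ v) @ x) s' k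
          + (if k \<in> labels (u @ [(c, True), (d, True)] @ v) \<and> k \<in> labels x then sum_list (map (sg s') Q) else 0)"
        by (rule idx_ins[OF d1]) (use kc Q mem in auto)
      also have "\<dots> = idx ((u @ [(c, True), (d, True)] @ v) @ x) s' k"
        using Q s'c s'd cd by (auto simp: sg_def)
      also have "\<dots> = idx (u @ [(c, True), (d, True)] @ (v @ x)) s' k" by simp
      also have "\<dots> = idx (u @ (v @ x)) s' k
          + (if k \<in> labels u \<and> k \<in> labels (v @ x) then sum_list (map (sg s') [(c, True), (d, True)]) else 0)"
        by (rule idx_ins) (use d1 kc mem in auto)
      also have "\<dots> = idx (u @ v @ x) s' k" using s'c s'd by (simp add: sg_def)
      also have "\<dots> = idx (u @ v @ x) s k" by (rule idx_cong_s) (use c d in \<open>auto simp: s'_def\<close>)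
      finally have "idx W s' k = idx (u @ v @ x) s k" unfolding W_def by simp
      then show "s' k = s k \<and> \<bar>idx W s' k\<bar> = \<bar>idx (u @ v @ x) s k\<bar>" using kc by (simp add: s'_def)
    qed
  qed auto
qed

lemma r3_setP:
  assumes ms: "mset [P1, P2, P3] = mset [r3_top e1 x y, r3_mid e2 x z, r3_bot e3 y z]"
  shows "set P1 \<union> set P2 \<union> set P3 = {(x, True), (y, True), (x, False), (z, True), (y, False), (z, False)}"
proof -
  have "{P1, P2, P3} = {r3_top e1 x y, r3_mid e2 x z, r3_bot e3 y z}"
    using arg_cong[OF ms, of set_mset] by simp
  then have "\<Union> (set ` {P1, P2, P3}) = \<Union> (set ` {r3_top e1 x y, r3_mid e2 x z, r3_bot e3 y z})"
    by simp
  then show ?thesis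
    by (auto simp: r3_top_def r3_mid_def r3_bot_def split: if_splits)
qed

lemma idx_block:
  assumes d1: "distinct (a @ m @ b)" and d2: "distinct (a @ m' @ b)" and sm: "set m' = set m"
    and ssum: "sum_list (map (sg s) m') = sum_list (map (sg s) m)" and nm: "k \<notin> labels m"
    and T: "(k, True) \<in> set (a @ b)" and F: "(k, False) \<in> set (a @ b)"
  shows "idx (a @ m' @ b) s k = idx (a @ m @ b) s k"
proof -
  have nm': "k \<notin> labels m'" using nm sm unfolding labels_def by simp
  show ?thesis using idx_ins[OF d1 nm T F, of s] idx_ins[OF d2 nm' T F, of s] ssum by simp
qed

lemma move_R3:
  assumes wf: "wf_gd (A @ P1 @ B @ P2 @ C @ P3 @ D) s"
    and xy: "x \<noteq> y" "x \<noteq> z" "y \<noteq> z"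
    and es: "e1 \<in> {1, -1}" "e2 \<in> {1, -1}" "e3 \<in> {1, -1}" "\<omega> \<in> {1, -1}"
    and ms: "mset [P1, P2, P3] = mset [r3_top e1 x y, r3_mid e2 x z, r3_bot e3 y z]"
    and sx: "s x = e1 * e2 * \<omega>" and sy: "s y = e1 * e3 * \<omega>" and sz: "s z = e2 * e3 * \<omega>"
  shows "wf_gd (A @ rev P1 @ B @ rev P2 @ C @ rev P3 @ D) s \<and>
         pt (A @ P1 @ B @ P2 @ C @ P3 @ D, s) = pt (A @ rev P1 @ B @ rev P2 @ C @ rev P3 @ D, s)"
proof
  define W where "W = A @ P1 @ B @ P2 @ C @ P3 @ D"
  define V where "V = A @ rev P1 @ B @ rev P2 @ C @ rev P3 @ D"
  have dist: "distinct W" using wf unfolding W_def by (rule wf_dist)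
  have setVW: "set V = set W" unfolding V_def W_def by auto
  have labVW: "labels V = labels W" unfolding labels_def using setVW by simp
  have distV: "distinct V" using dist unfolding V_def W_def by auto
  show "wf_gd V s" using wf distV setVW labVW unfolding wf_gd_def W_def by simp
  have setP: "set P1 \<union> set P2 \<union> set P3 = {(x, True), (y, True), (x, False), (z, True), (y, False), (z, False)}"
    by (rule r3_setP[OF ms])
  show "pt (W, s) = pt (V, s)"
  proof (rule sym, rule pt_eq[where N = "{}"])
    show "\<forall>k\<in>labels W. s k = s k \<and> \<bar>idx V s k\<bar> = \<bar>idx W s k\<bar>"
    proof
      fix k assume k: "k \<in> labels W"
      have "idx V s k = idx W s k"
      proof (cases "k \<in> {x, y, z}")
        case True
        show ?thesis unfolding V_def W_def
          by (rule r3_own[OF dist[unfolded W_def] xy es ms sx sy sz True])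
      next
        case False
        have nP: "(k, b) \<notin> set P1" "(k, b) \<notin> set P2" "(k, b) \<notin> set P3" for b
          using setP False by auto
        have nl: "k \<notin> labels P1" "k \<notin> labels P2" "k \<notin> labels P3"
          using nP unfolding labels_iff by auto
        have mem: "(k, True) \<in> set W" "(k, False) \<in> set W" using wf_mem[OF wf k[unfolded W_def]] W_def by auto
        have "idx (A @ rev P1 @ (B @ rev P2 @ C @ rev P3 @ D)) s k = idx (A @ P1 @ (B @ rev P2 @ C @ rev P3 @ D)) s k"
          by (rule idx_block) (use dist mem nP nl in \<open>auto simp: W_def rev_map[symmetric] sum_list_rev\<close>)
        also have "\<dots> = idx ((A @ P1 @ B) @ rev P2 @ (C @ rev P3 @ D)) s k" by simp
        also have "\<dots> = idx ((A @ P1 @ B) @ P2 @ (C @ rev P3 @ D)) s k"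
          by (rule idx_block) (use dist mem nP nl in \<open>auto simp: W_def rev_map[symmetric] sum_list_rev\<close>)
        also have "\<dots> = idx ((A @ P1 @ B @ P2 @ C) @ rev P3 @ D) s k" by simp
        also have "\<dots> = idx ((A @ P1 @ B @ P2 @ C) @ P3 @ D) s k"
          by (rule idx_block) (use dist mem nP nl in \<open>auto simp: W_def rev_map[symmetric] sum_list_rev\<close>)
        finally show ?thesis unfolding V_def W_def by simp
      qed
      then show "s k = s k \<and> \<bar>idx V s k\<bar> = \<bar>idx W s k\<bar>" by simp
    qed
  qed (use labVW in auto)
qed


lemma move_inv:
  assumes "gd_move D1 D2"
  shows "wf_gd (fst D1) (snd D1) \<and> wf_gd (fst D2) (snd D2) \<and> pt D1 = pt D2"
  using assms
proof (induction rule: gd_move.induct)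
  case (rotate u v s) then show ?case using move_rotate[OF rotate.hyps] by simp
next
  case (relabel w s f s') then show ?case using move_relabel[OF relabel.hyps] by simp
next
  case (R1 u v s c e b) then show ?case using move_R1[OF R1.hyps, of b] by (simp only: fst_conv snd_conv)
next
  case (R2 u v x s c d e Q) then show ?case using move_R2[OF R2.hyps] by (simp only: fst_conv snd_conv)
next
  case (R3 A P1 B P2 C P3 D s x y z e1 e2 e3 \<omega>)
  then show ?case using move_R3[OF R3.hyps] by (simp only: fst_conv snd_conv)
qed

lemma equiv_inv:
  assumes "gd_equiv D1 D2" and "wf_gd (fst D1) (snd D1)"
  shows "wf_gd (fst D2) (snd D2) \<and> pt D1 = pt D2"
  using assms(1) unfolding gd_equiv_def
proof (induction rule: rtranclp_induct)
  case base then show ?case using assms(2) by simp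
next
  case (step D D')
  from step(2) show ?case
  proof (rule symclpE)
    assume "gd_move D D'" then show ?thesis using move_inv step(3) by metis
  next
    assume "gd_move D' D" then show ?thesis using move_inv step(3) by metis
  qed
qed

lemma pt_invariant: "is_invariant pt"
  unfolding is_invariant_def using equiv_inv by blast

lemma alt_zero:
  fixes G :: "nat set \<Rightarrow> 'a::ab_group_add"
  assumes fin: "finite A" and e: "e \<in> A" and G: "\<And>T. G (insert e T) = G T"
  shows "(\<Sum>S\<in>Pow A. if even (card S) then G S else - G S) = 0"
proof -
  define A' where "A' = A - {e}"
  have A: "A = insert e A'" and nA: "e \<notin> A'" and finA': "finite A'"
    using e fin unfolding A'_def by auto
  define f where "f S = (if even (card S) then G S else - G S)" for S
  have P: "Pow A = Pow A' \<union> insert e ` Pow A'" unfolding A by (simp add: Pow_insert)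
  have disj: "Pow A' \<inter> insert e ` Pow A' = {}" using nA by auto
  have inj: "inj_on (insert e) (Pow A')"
  proof (rule inj_onI)
    fix X Y assume "X \<in> Pow A'" "Y \<in> Pow A'" "insert e X = insert e Y"
    then show "X = Y" using nA insert_ident[of e X Y] by blast
  qed
  have "(\<Sum>S\<in>Pow A. f S) = (\<Sum>S\<in>Pow A'. f S) + (\<Sum>S\<in>insert e ` Pow A'. f S)"
    unfolding P by (rule sum.union_disjoint) (use finA' disj in auto)
  also have "(\<Sum>S\<in>insert e ` Pow A'. f S) = (\<Sum>T\<in>Pow A'. f (insert e T))"
    by (rule sum.reindex[OF inj, unfolded comp_def])
  also have "\<dots> = (\<Sum>T\<in>Pow A'. - f T)"
  proof (rule sum.cong[OF refl])
    fix T assume "T \<in> Pow A'"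
    then have "finite T" "e \<notin> T" using finA' nA finite_subset by auto
    then have "card (insert e T) = Suc (card T)" by simp
    then show "f (insert e T) = - f T" unfolding f_def G by simp
  qed
  finally show ?thesis unfolding f_def[symmetric] by (simp add: sum_negf)
qed

lemma resolve_labels: "labels (fst (resolve w s S)) = labels w"
  unfolding resolve_def labels_def by (force simp: image_image split_def)

lemma idx_resolve:
  assumes wf: "wf_gd w s" and d: "d \<in> labels w"
  shows "idx (fst (resolve w s S)) (snd (resolve w s S)) d = idx w s d"
proof -
  define g where "g = (\<lambda>(c::nat, b::bool). (c, if c \<in> S then \<not> b else b))"
  define s' where "s' = (\<lambda>c. if c \<in> S then - s c else s c)"
  have r: "resolve w s S = (map g w, s')" unfolding resolve_def g_def s'_def by simp
  have inj: "inj_on g (set w)" unfolding g_def by (rule inj_onI) (auto split: if_splits)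
  have fg: "\<forall>e\<in>set w. fst (g e) = (\<lambda>x. x) (fst e)" unfolding g_def by auto
  have sgg: "\<forall>e\<in>set w. sg s' (g e) = sg s e" unfolding g_def s'_def sg_def by auto
  show ?thesis unfolding r fst_conv snd_conv
    using idx_map[OF wf_dist[OF wf] _ _ inj fg sgg] wf_mem[OF wf d] by simp
qed

lemma pt_resolve:
  assumes wf: "wf_gd w s"
  shows "pt (resolve w s S) = (\<Sum>d\<in>labels w. smult (if d \<in> S then - s d else s d) (monom 1 (nat \<bar>idx w s d\<bar>) - 1))"
  unfolding pt_def resolve_labels
proof (rule sum.cong[OF refl])
  fix d assume "d \<in> labels w"
  then show "smult (snd (resolve w s S) d) (monom 1 (nat \<bar>idx (fst (resolve w s S)) (snd (resolve w s S)) d\<bar>) - 1)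
     = smult (if d \<in> S then - s d else s d) (monom 1 (nat \<bar>idx w s d\<bar>) - 1)"
    using idx_resolve[OF wf] by (simp add: resolve_def)
qed

lemma vext_formula:
  assumes wf: "wf_gd w s"
  shows "vext pt w s Dp = (\<Sum>d\<in>labels w. \<Sum>S\<in>Pow Dp.
     if even (card S) then smult (if d \<in> S then - s d else s d) (monom 1 (nat \<bar>idx w s d\<bar>) - 1)
     else - smult (if d \<in> S then - s d else s d) (monom 1 (nat \<bar>idx w s d\<bar>) - 1))"
proof -
  have "vext pt w s Dp = (\<Sum>S\<in>Pow Dp. \<Sum>d\<in>labels w.
     if even (card S) then smult (if d \<in> S then - s d else s d) (monom 1 (nat \<bar>idx w s d\<bar>) - 1)
     else - smult (if d \<in> S then - s d else s d) (monom 1 (nat \<bar>idx w s d\<bar>) - 1))"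
    unfolding vext_def pt_resolve[OF wf] by (rule sum.cong[OF refl]) (simp add: sum_negf)
  then show ?thesis by (simp only: sum.swap[of _ "Pow Dp"])
qed

lemma vass_le1: "vassiliev_le pt 1"
  unfolding vassiliev_le_def
proof (intro allI impI)
  fix w s Dp assume sw: "sing_wf w s Dp" and card: "1 < card Dp"
  have wf: "wf_gd w s" using sw unfolding sing_wf_def by simp
  have fin: "finite Dp" using card card.infinite by fastforce
  show "vext pt w s Dp = 0"
    unfolding vext_formula[OF wf]
  proof (rule sum.neutral, rule ballI)
    fix d assume "d \<in> labels w"
    have "\<not> Dp \<subseteq> {d}"
    proof
      assume "Dp \<subseteq> {d}"
      then have "card Dp \<le> card {d}" by (rule card_mono[rotated]) simp
      then show False using card by simp
    qed
    then obtain e where e: "e \<in> Dp" "e \<noteq> d" by blast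
    show "(\<Sum>S\<in>Pow Dp.
     if even (card S) then smult (if d \<in> S then - s d else s d) (monom 1 (nat \<bar>idx w s d\<bar>) - 1)
     else - smult (if d \<in> S then - s d else s d) (monom 1 (nat \<bar>idx w s d\<bar>) - 1)) = 0"
      by (rule alt_zero[OF fin e(1)]) (use e(2) in simp)
  qed
qed

lemma not_vass_le0: "\<not> vassiliev_le pt 0"
proof
  assume h: "vassiliev_le pt 0"
  define w0 :: gword where "w0 = [(0, True), (1, True), (0, False), (1, False)]"
  define s0 :: "nat \<Rightarrow> int" where "s0 = (\<lambda>_. 1)"
  have lab: "labels w0 = {0, 1}" unfolding w0_def labels_def by auto
  have wf: "wf_gd w0 s0" unfolding wf_gd_def lab unfolding w0_def s0_def by simp
  have sw: "sing_wf w0 s0 {0}" unfolding sing_wf_def using wf lab by (simp add: s0_def)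
  have i0: "idx w0 s0 0 = 1"
    using idx_dec[of "[]" "(0, True)" "[(1, True)]" "(0, False)" "[(1, False)]" 0 s0]
    unfolding w0_def s0_def by (simp add: sg_def)
  have i1: "idx w0 s0 1 = -1"
    using idx_dec[of "[(0, True)]" "(1, True)" "[(0, False)]" "(1, False)" "[]" 1 s0]
    unfolding w0_def s0_def by (simp add: sg_def)
  have "vext pt w0 s0 {0} = 0" using h sw unfolding vassiliev_le_def by simp
  moreover have "coeff (vext pt w0 s0 {0}) 1 = 2"
    unfolding vext_formula[OF wf] lab using i0 i1
    by (simp add: Pow_insert s0_def coeff_monom coeff_sum mult_2 numeral_poly)
  ultimately show False by simp
qed

theorem mainTheorem2:
  shows "is_invariant pt \<and> vassiliev_degree pt 1"
  unfolding vassiliev_degree_def using pt_invariant vass_le1 not_vass_le0 by auto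


end
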